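(* Let $\lambda$ be a nonzero real number and $n$ a positive integer. Then $$\beta_{n-1,-\lambda}(2\lambda+1)=\sum_{k=1}^{n}(k-1)!\,(-1)^{n-k}H_{k,-\lambda}\,S_{2,\lambda}(n,k).$$
   Context: For a nonzero real parameter $\mu$ (used here with $\mu=\lambda$ and $\mu=-\lambda$), real $y$ and integer $k\ge0$: $(y)_{0,\mu}=1$, $(y)_{k,\mu}=y(y-\mu)\cdots(y-(k-1)\mu)$; $(y)_0=1$, $(y)_k=y(y-1)\cdots(y-k+1)$. The degenerate exponential is $e_\mu^x(t)=\sum_{k\ge0}(x)_{k,\mu}t^k/k!=(1+\mu t)^{x/\mu}$, $e_\mu(t)=e^1_\mu(t)$. The degenerate Bernoulli polynomials are defined by $\frac{t}{e_\mu(t)-1}e_\mu^x(t)=\sum_{n\ge0}\beta_{n,\mu}(x)\frac{t^n}{n!}$. The degenerate Stirling numbers of the second kind $S_{2,\mu}(n,k)$ are defined by $(x)_{n,\mu}=\sum_{k=0}^{n}S_{2,\mu}(n,k)(x)_{k}$ ($n\ge0$). The degenerate harmonic numbers are $H_{0,\mu}=0$ and $H_{n,\mu}=\sum_{k=1}^{n}\frac{1}{\mu}\binom{\mu}{k}(-1)^{k-1}$ for $n\ge1$. *)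

theory Defs
  imports Complex_Main "HOL-Computational_Algebra.Formal_Power_Series"
begin

definition dff :: "real \<Rightarrow> real \<Rightarrow> nat \<Rightarrow> real" where
  "dff mu y k = (\<Prod>i<k. y - real i * mu)"

definition ff :: "real \<Rightarrow> nat \<Rightarrow> real" where
  "ff y k = (\<Prod>i<k. y - real i)"

definition dexp :: "real \<Rightarrow> real \<Rightarrow> real fps" where
  "dexp mu x = Abs_fps (\<lambda>k. dff mu x k / fact k)"

definition dbern :: "nat \<Rightarrow> real \<Rightarrow> real \<Rightarrow> real" where
  "dbern n mu x = fact n * fps_nth (fps_X / (dexp mu 1 - 1) * dexp mu x) n"

definition dstirling2 :: "real \<Rightarrow> nat \<Rightarrow> nat \<Rightarrow> real" where
  "dstirling2 mu n k = (THE c. (\<forall>j>n. c j = 0) \<and>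
      (\<forall>x::real. dff mu x n = (\<Sum>j=0..n. c j * ff x j))) k"

definition dharm :: "real \<Rightarrow> nat \<Rightarrow> real" where
  "dharm mu n = (\<Sum>k=1..n. (1/mu) * (mu gchoose k) * (-1)^(k-1))"

end

theory Submission
  imports Defs
begin

unbundle fps_syntax

lemma coefX: fixes D :: "real fps" shows "((1 + fps_const c * fps_X) * D) $ n = D$n + (if n = 0 then 0 else c * D$(n-1))"
proof -
  have "(1 + fps_const c * fps_X) * D = D + fps_const c * (fps_X * D)" by (simp add: algebra_simps)
  then show ?thesis by (simp del: fps_mult_fps_X_commute)
qed

lemma dff_Suc: "dff mu x (Suc n) = dff mu x n * (x - real n * mu)"
  by (simp add: dff_def)

lemma dexp_nth: "dexp mu x $ n = dff mu x n / fact n"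
  by (simp add: dexp_def)

lemma dexp_ode: "(1 + fps_const mu * fps_X) * fps_deriv (dexp mu x) = fps_const x * dexp mu x"
proof (rule fps_ext)
  fix n
  show "((1 + fps_const mu * fps_X) * fps_deriv (dexp mu x)) $ n = (fps_const x * dexp mu x) $ n"
  proof (cases n)
    case 0 then show ?thesis by (simp add: coefX dexp_nth dff_def)
  next
    case (Suc m)
    have "((1 + fps_const mu * fps_X) * fps_deriv (dexp mu x)) $ n
        = real (Suc n) * (dff mu x n * (x - real n * mu) / fact (Suc n)) + mu * (real n * (dff mu x n / fact n))"
      using Suc by (simp add: coefX dexp_nth dff_Suc)
    also have "\<dots> = (dff mu x n * (x - real n * mu) + mu * real n * dff mu x n) / fact n"
      by (simp add: fact_Suc add_divide_distrib del: of_nat_Suc)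
    also have "\<dots> = x * (dff mu x n / fact n)"
      by (simp add: algebra_simps)
    finally show ?thesis by (simp add: dexp_nth)
  qed
qed

lemma ode_coef:
  assumes "(1 + fps_const mu * fps_X) * fps_deriv F = fps_const x * F"
  shows "real (Suc n) * F $ Suc n = (x - real n * mu) * F $ n"
proof -
  have "((1 + fps_const mu * fps_X) * fps_deriv F) $ n = (fps_const x * F) $ n" using assms by simp
  then show ?thesis by (cases n) (auto simp: coefX algebra_simps)
qed

lemma ode_unique:
  assumes "(1 + fps_const mu * fps_X) * fps_deriv F = fps_const x * F" and "F $ 0 = 1"
  shows "F = dexp mu x"
proof (rule fps_ext)
  fix n show "F $ n = dexp mu x $ n"
  proof (induction n)
    case 0 then show ?case using assms by (simp add: dexp_nth dff_def)
  next
    case (Suc n)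
    have a: "real (Suc n) * F $ Suc n = (x - real n * mu) * F $ n" by (rule ode_coef[OF assms(1)])
    have b: "real (Suc n) * dexp mu x $ Suc n = (x - real n * mu) * dexp mu x $ n" by (rule ode_coef[OF dexp_ode])
    from a b Suc show ?case by (metis mult_left_cancel of_nat_0_eq_iff nat.distinct(1))
  qed
qed

lemma dexp_0th [simp]: "dexp mu x $ 0 = 1"
  by (simp add: dexp_nth dff_def)

lemma dexp_mult: "dexp mu x * dexp mu y = dexp mu (x + y)"
proof (rule ode_unique)
  let ?P = "1 + fps_const mu * fps_X"
  have "?P * fps_deriv (dexp mu x * dexp mu y) = dexp mu x * (?P * fps_deriv (dexp mu y)) + (?P * fps_deriv (dexp mu x)) * dexp mu y"
    by (simp add: fps_deriv_mult algebra_simps)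
  also have "\<dots> = fps_const (x + y) * (dexp mu x * dexp mu y)"
    unfolding dexp_ode by (simp add: algebra_simps flip: fps_const_add)
  finally show "?P * fps_deriv (dexp mu x * dexp mu y) = fps_const (x + y) * (dexp mu x * dexp mu y)" .
qed simp

lemma dexp_zero: "dexp mu 0 = 1"
  by (rule ode_unique[symmetric]) simp_all

lemma dexp_neg_mu: "dexp mu (-mu) * (1 + fps_const mu * fps_X) = 1"
proof -
  let ?G = "dexp mu (-mu) * (1 + fps_const mu * fps_X)"
  have "fps_deriv ?G = (1 + fps_const mu * fps_X) * fps_deriv (dexp mu (-mu)) + dexp mu (-mu) * fps_const mu"
    by (simp add: fps_deriv_mult algebra_simps)
  also have "\<dots> = 0" by (simp add: dexp_ode fps_const_neg[symmetric] del: fps_const_neg)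
  finally have "?G = fps_const (?G $ 0)" by (simp only: fps_deriv_eq_0_iff)
  moreover have "?G $ 0 = 1" by simp
  ultimately show ?thesis by (metis fps_const_1_eq_1)
qed


lemma nz0: "(f::real fps) $ 0 \<noteq> 0 \<Longrightarrow> f \<noteq> 0" by auto

lemma binom_comp: "fps_binomial a oo (dexp mu c - 1) = dexp mu (a*c)"
proof (rule ode_unique)
  let ?w = "dexp mu c - 1"
  let ?B = "fps_binomial a"
  let ?P = "1 + fps_const mu * fps_X"
  let ?F = "?B oo ?w"
  have w0: "?w $ 0 = 0" by simp
  have "fps_deriv ?B * (1 + fps_X) = fps_const a * ?B"
    unfolding fps_binomial_deriv by (rule fps_times_divide_eq) (auto intro!: nz0)
  then have bode: "(1 + fps_X) * fps_deriv ?B = fps_const a * ?B" by (simp add: mult.commute)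
  have c1: "((1 + fps_X) * fps_deriv ?B) oo ?w = dexp mu c * (fps_deriv ?B oo ?w)"
    by (simp add: fps_compose_mult_distrib[OF w0] fps_compose_add_distrib w0)
  have c2: "(fps_const a * ?B) oo ?w = fps_const a * ?F"
    by (simp add: fps_compose_mult_distrib[OF w0])
  have key: "dexp mu c * (fps_deriv ?B oo ?w) = fps_const a * ?F"
    using c1 c2 bode by simp
  have "dexp mu c * (?P * fps_deriv ?F) = (dexp mu c * (fps_deriv ?B oo ?w)) * (?P * fps_deriv (dexp mu c))"
    by (simp add: fps_compose_deriv[OF w0] algebra_simps)
  also have "\<dots> = (fps_const a * ?F) * (fps_const c * dexp mu c)"
    by (simp only: key dexp_ode)
  also have "\<dots> = dexp mu c * (fps_const (a * c) * ?F)"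
    by (simp add: algebra_simps fps_const_mult[symmetric] del: fps_const_mult)
  finally have "dexp mu c * (?P * fps_deriv ?F) = dexp mu c * (fps_const (a * c) * ?F)" .
  moreover have "dexp mu c \<noteq> 0"
    by (metis dexp_0th fps_zero_nth zero_neq_one)
  ultimately show "?P * fps_deriv ?F = fps_const (a * c) * ?F" by simp
  show "?F $ 0 = 1" by simp
qed


lemma dff_neg: "dff (-l) (-x) n = (-1)^n * dff l x n"
  by (induction n) (simp_all add: dff_Suc algebra_simps dff_def)

lemma ff_gchoose: "ff x j = fact j * (x gchoose j)"
  by (simp add: ff_def gbinomial_mult_fact lessThan_atLeast0)

lemma stir_exist:
  fixes l x :: real
  defines "w \<equiv> dexp (-l) (-1) - 1"
  shows "dff l x n = (\<Sum>j=0..n. ((-1)^n * fact n * (w^j $ n) / fact j) * ff x j)"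
proof -
  have "(fps_binomial x oo w) $ n = dexp (-l) (x * -1) $ n"
    unfolding w_def by (simp only: binom_comp)
  then have "(\<Sum>j=0..n. (x gchoose j) * (w^j $ n)) = (-1)^n * dff l x n / fact n"
    by (simp add: fps_compose_nth dexp_nth dff_neg)
  then have h: "fact n * (\<Sum>j=0..n. (x gchoose j) * (w^j $ n)) = (-1)^n * dff l x n"
    by (simp add: field_simps)
  have m1: "(-1::real)^n * (-1)^n = 1" by (simp add: power_add[symmetric])
  have "dff l x n = (-1)^n * fact n * (\<Sum>j=0..n. (x gchoose j) * (w^j $ n))"
    by (simp only: mult.assoc h) (simp add: mult.assoc[symmetric] m1)
  also have "\<dots> = (\<Sum>j=0..n. ((-1)^n * fact n * (w^j $ n) / fact j) * ff x j)"
    by (simp add: sum_distrib_left ff_gchoose mult_ac)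
  finally show ?thesis .
qed

lemma ff_nat_zero: "j < i \<Longrightarrow> ff (real j) i = 0"
  unfolding ff_def by (rule prod_zero) auto

lemma ff_nat_nz: "ff (real j) j \<noteq> 0"
  unfolding ff_def by (simp add: prod_zero_iff)

lemma uniq:
  assumes "\<forall>j>n. d j = 0" "\<forall>x. (\<Sum>j=0..n. d j * ff x j) = 0"
  shows "d j = 0"
proof (induction j rule: less_induct)
  case (less j)
  show ?case
  proof (cases "j > n")
    case True then show ?thesis using assms(1) by simp
  next
    case False
    have "0 = (\<Sum>i=0..n. d i * ff (real j) i)" using assms(2) by simp
    also have "\<dots> = (\<Sum>i=0..n. if i = j then d j * ff (real j) j else 0)"
    proof (rule sum.cong)
      fix i assume "i \<in> {0..n}"
      show "d i * ff (real j) i = (if i = j then d j * ff (real j) j else 0)"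
        using less.IH[of i] ff_nat_zero[of j i] by (cases "i < j"; cases "i = j") auto
    qed simp
    also have "\<dots> = d j * ff (real j) j" using False by simp
    finally show ?thesis using ff_nat_nz[of j] by simp
  qed
qed

lemma stir_val:
  fixes l :: real
  defines "w \<equiv> dexp (-l) (-1) - 1"
  shows "dstirling2 l n k = (-1)^n * fact n * (w^k $ n) / fact k"
proof -
  define c0 where "c0 = (\<lambda>j. (-1)^n * fact n * (w^j $ n) / fact j :: real)"
  have w0: "w $ 0 = 0" unfolding w_def by simp
  have "(THE c. (\<forall>j>n. c j = 0) \<and> (\<forall>x::real. dff l x n = (\<Sum>j=0..n. c j * ff x j))) = c0"
  proof (rule the_equality)
    show "(\<forall>j>n. c0 j = 0) \<and> (\<forall>x::real. dff l x n = (\<Sum>j=0..n. c0 j * ff x j))"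
      using startsby_zero_power_prefix[OF w0] stir_exist[of l] unfolding c0_def w_def by auto
  next
    fix c assume c: "(\<forall>j>n. c j = 0) \<and> (\<forall>x::real. dff l x n = (\<Sum>j=0..n. c j * ff x j))"
    have c0p: "(\<forall>j>n. c0 j = 0) \<and> (\<forall>x::real. dff l x n = (\<Sum>j=0..n. c0 j * ff x j))"
      using startsby_zero_power_prefix[OF w0] stir_exist[of l] unfolding c0_def w_def by auto
    show "c = c0"
    proof
      fix j
      have "(\<lambda>j. c j - c0 j) j = 0"
      proof (rule uniq[of n])
        show "\<forall>j>n. c j - c0 j = 0" using c c0p by simp
        show "\<forall>x. (\<Sum>j=0..n. (c j - c0 j) * ff x j) = 0"
          using c c0p by (simp add: left_diff_distrib sum_subtractf)
      qed
      then show "c j = c0 j" by simp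
    qed
  qed
  then show ?thesis unfolding dstirling2_def c0_def by simp
qed


lemma neg_pow_nth: "((- (w::real fps))^k) $ n = (-1)^k * (w^k $ n)"
  by (cases "even k") simp_all

lemma dharm_0 [simp]: "dharm m 0 = 0" by (simp add: dharm_def)

lemma dharm_Suc: "dharm m (Suc n) = dharm m n + (1/m) * (m gchoose Suc n) * (-1)^n"
  by (simp add: dharm_def)

lemma sign_lemma: "k \<le> n \<Longrightarrow> (-1::real)^(n-k) * (-1)^n = (-1)^k"
proof -
  assume "k \<le> n"
  then have "(-1::real)^n = (-1)^(n-k) * (-1)^k" by (simp add: power_add[symmetric])
  then have "(-1::real)^(n-k) * (-1)^n = ((-1)^(n-k) * (-1)^(n-k)) * (-1)^k" by (simp add: mult_ac)
  also have "\<dots> = (-1)^k" by (simp add: power_add[symmetric])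
  finally show ?thesis .
qed

lemma G_id:
  fixes m :: real
  assumes "m \<noteq> 0"
  shows "fps_const m * (fps_X * ((1 - fps_X) * Abs_fps (\<lambda>k. dharm m (Suc k))))
         = 1 - Abs_fps (\<lambda>k. (m gchoose k) * (-1)^k)"
proof (rule fps_ext)
  fix n
  let ?G = "Abs_fps (\<lambda>k. dharm m (Suc k))"
  have a: "((1 - fps_X) * ?G) $ j = ?G $ j - (if j = 0 then 0 else ?G $ (j - 1))" for j
  proof -
    have "(1 - fps_X) * ?G = ?G - fps_X * ?G" by (simp add: algebra_simps)
    then show ?thesis by (simp del: fps_mult_fps_X_commute)
  qed
  show "(fps_const m * (fps_X * ((1 - fps_X) * ?G))) $ n = (1 - Abs_fps (\<lambda>k. (m gchoose k) * (-1)^k)) $ n"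
  proof (cases n)
    case 0 then show ?thesis by (simp del: fps_mult_fps_X_commute)
  next
    case (Suc j)
    have "(fps_const m * (fps_X * ((1 - fps_X) * ?G))) $ n = m * (dharm m (Suc j) - dharm m j)"
      using Suc a by (cases j) (simp_all del: fps_mult_fps_X_commute)
    also have "\<dots> = - ((m gchoose Suc j) * (-1)^Suc j)"
      using assms by (simp add: dharm_Suc)
    finally show ?thesis using Suc by simp
  qed
qed


lemma sq1: "(s::real) * s = 1 \<Longrightarrow> a * s * (s * x) = a * x"
  by (metis mult.assoc mult.left_commute mult.right_neutral)

lemma main_deriv:
  fixes l :: real
  assumes l0: "l \<noteq> 0"
  defines "E \<equiv> dexp (-l) (-1)"
  defines "u \<equiv> 1 - E"
  defines "Hs \<equiv> Abs_fps (\<lambda>k. dharm (-l) k / real k)"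
  shows "fps_deriv (Hs oo u) = fps_X / (dexp (-l) 1 - 1) * dexp (-l) (2 * l + 1)"
proof -
  let ?G = "Abs_fps (\<lambda>k. dharm (-l) (Suc k))"
  let ?Bp = "Abs_fps (\<lambda>k. ((-l) gchoose k) * (-1)^k)"
  let ?P = "1 + fps_const (-l) * fps_X"
  define Dl where "Dl = dexp (-l) l"
  define D1 where "D1 = dexp (-l) 1"
  define R where "R = Hs oo u"
  have u0: "u $ 0 = 0" unfolding u_def E_def by simp
  have dHs: "fps_deriv Hs = ?G"
    by (rule fps_ext) (simp add: Hs_def del: of_nat_Suc)
  have Bpc: "?Bp oo u = fps_binomial (-l) oo (E - 1)"
  proof (rule fps_ext)
    fix n
    have uE: "u = - (E - 1)" unfolding u_def by simp
    have pp: "(-1::real)^i * (-1)^i = 1" for i by (simp add: power_add[symmetric])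
    show "(?Bp oo u) $ n = (fps_binomial (-l) oo (E - 1)) $ n"
      unfolding fps_compose_nth uE
    proof (rule sum.cong)
      fix i
      show "?Bp $ i * ((- (E - 1)) ^ i $ n) = fps_binomial (-l) $ i * ((E - 1) ^ i $ n)"
        by (simp only: neg_pow_nth fps_nth_Abs_fps fps_binomial_nth) (rule sq1[OF pp])
    qed simp
  qed
  also have "\<dots> = Dl" unfolding E_def Dl_def by (simp add: binom_comp)
  finally have Bpc: "?Bp oo u = Dl" .
  have PDl: "Dl * ?P = 1" unfolding Dl_def using dexp_neg_mu[of "-l"] by simp
  have "(fps_const (-l) * (fps_X * ((1 - fps_X) * ?G))) oo u = (1 - ?Bp) oo u"
    using G_id[of "-l"] l0 by simp
  then have "fps_const (-l) * (u * ((1 - u) * (?G oo u))) = 1 - Dl"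
    by (simp add: fps_compose_mult_distrib[OF u0] fps_compose_sub_distrib u0 Bpc)
  then have "fps_const (-l) * (u * (E * (?G oo u))) * ?P = (1 - Dl) * ?P"
    unfolding u_def by simp
  also have "\<dots> = fps_const (-l) * fps_X"
    using PDl by (simp add: algebra_simps)
  finally have "fps_const (-l) * (u * E * (?G oo u) * ?P) = fps_const (-l) * fps_X"
    by (simp add: mult_ac)
  moreover have "fps_const (-l) \<noteq> 0" using l0 by simp
  ultimately have eq1: "u * E * (?G oo u) * ?P = fps_X" by simp
  have Eode: "?P * fps_deriv E = - E"
  proof -
    have "fps_const (-1::real) * E = - E" by (metis fps_const_neg fps_const_1_eq_1 mult_minus1)
    then show ?thesis unfolding E_def using dexp_ode[of "-l" "-1"] by simp
  qed
  have dR: "fps_deriv R = (?G oo u) * fps_deriv u"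
    unfolding R_def by (simp add: fps_compose_deriv[OF u0] dHs)
  have eq2: "?P * fps_deriv R = (?G oo u) * E"
  proof -
    have "?P * fps_deriv R = - ((?G oo u) * (?P * fps_deriv E))"
      unfolding dR u_def by (simp add: algebra_simps)
    then show ?thesis using Eode by simp
  qed
  have eq3: "fps_deriv R = (?G oo u) * E * Dl"
  proof -
    have "fps_deriv R = fps_deriv R * (Dl * ?P)" using PDl by simp
    also have "\<dots> = (?P * fps_deriv R) * Dl" by (simp add: mult_ac)
    finally show ?thesis using eq2 by simp
  qed
  have D1E: "D1 * E = 1" unfolding D1_def E_def by (simp add: dexp_mult dexp_zero)
  have D1m: "D1 - 1 = D1 * u" unfolding u_def using D1E by (simp add: algebra_simps)
  have D2: "dexp (-l) (2 * l + 1) = D1 * Dl * Dl"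
    unfolding D1_def Dl_def by (simp add: dexp_mult algebra_simps)
  have D1nz: "D1 - 1 \<noteq> 0"
  proof
    assume "D1 - 1 = 0"
    then have "(D1 - 1) $ 1 = 0" by simp
    then show False unfolding D1_def by (simp add: dexp_nth dff_def)
  qed
  have sd: "subdegree (D1 - 1) \<le> subdegree (fps_X :: real fps)"
  proof -
    have "(D1 - 1) $ 1 \<noteq> 0" unfolding D1_def by (simp add: dexp_nth dff_def)
    then show ?thesis by (simp add: subdegree_leI)
  qed
  have Lm: "fps_X / (D1 - 1) * dexp (-l) (2 * l + 1) * (D1 - 1) = fps_X * dexp (-l) (2 * l + 1)"
    using fps_times_divide_eq[OF D1nz sd] by (simp add: mult_ac)
  have "fps_deriv R * (D1 - 1) = (?G oo u) * E * Dl * D1 * u"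
    using eq3 D1m by (simp add: mult_ac)
  also have "\<dots> = (u * E * (?G oo u) * ?P) * (D1 * Dl * Dl)"
  proof -
    have "(u * E * (?G oo u) * ?P) * (D1 * Dl * Dl) = (u * E * (?G oo u) * D1 * Dl) * (Dl * ?P)"
      by (simp add: mult_ac)
    then show ?thesis using PDl by (simp add: mult_ac)
  qed
  also have "\<dots> = fps_X * dexp (-l) (2 * l + 1)" using eq1 D2 by simp
  finally have "fps_deriv R * (D1 - 1) = fps_X / (D1 - 1) * dexp (-l) (2 * l + 1) * (D1 - 1)"
    unfolding Lm .
  then have "fps_deriv R = fps_X / (D1 - 1) * dexp (-l) (2 * l + 1)"
    using D1nz by (rule mult_right_cancel[THEN iffD1, rotated])
  then show ?thesis unfolding R_def D1_def .
qed



theorem theorem9: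
  fixes lambda :: real and n :: nat
  assumes "lambda \<noteq> 0" and "n \<ge> 1"
  shows "dbern (n - 1) (- lambda) (2 * lambda + 1) =
    (\<Sum>k=1..n. fact (k - 1) * (-1) ^ (n - k) * dharm (- lambda) k * dstirling2 lambda n k)"
proof -
  define E where "E = dexp (-lambda) (-1)"
  define u where "u = 1 - E"
  define Hs where "Hs = Abs_fps (\<lambda>k. dharm (-lambda) k / real k)"
  define w where "w = E - 1"
  have uw: "u = - w" unfolding u_def w_def by simp
  have dR: "fps_deriv (Hs oo u) = fps_X / (dexp (-lambda) 1 - 1) * dexp (-lambda) (2 * lambda + 1)"
    unfolding Hs_def u_def E_def by (rule main_deriv[OF assms(1)])
  obtain m where m: "n = Suc m" using assms(2) by (cases n) auto
  have "dbern (n - 1) (- lambda) (2 * lambda + 1) = fact m * (fps_deriv (Hs oo u) $ m)"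
    unfolding dbern_def dR m by simp
  also have "\<dots> = fact n * ((Hs oo u) $ n)"
    unfolding m by (simp add: fact_Suc)
  also have "(Hs oo u) $ n = (\<Sum>k=0..n. dharm (-lambda) k / real k * ((-1)^k * (w^k $ n)))"
    unfolding fps_compose_nth uw by (simp add: neg_pow_nth Hs_def)
  also have "\<dots> = (\<Sum>k=1..n. dharm (-lambda) k / real k * ((-1)^k * (w^k $ n)))"
    by (simp add: sum.atLeast_Suc_atMost)
  also have "fact n * \<dots> = (\<Sum>k=1..n. fact (k - 1) * (-1) ^ (n - k) * dharm (- lambda) k * dstirling2 lambda n k)"
    unfolding sum_distrib_left
  proof (rule sum.cong)
    fix k assume k: "k \<in> {1..n}"
    then obtain j where j: "k = Suc j" by (cases k) auto
    have s: "(-1::real)^(n-k) * (-1)^n = (-1)^k" using k sign_lemma by simp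
    have "fact (k - 1) * (-1) ^ (n - k) * dharm (- lambda) k * dstirling2 lambda n k
        = fact j * (-1) ^ (n - k) * dharm (- lambda) k * ((-1)^n * fact n * (w^k $ n) / fact k)"
      unfolding stir_val w_def E_def j by simp
    also have "\<dots> = fact n * (dharm (-lambda) k / real k * (((-1) ^ (n - k) * (-1)^n) * (w^k $ n)))"
      unfolding j by (simp add: fact_Suc field_simps del: of_nat_Suc)
    finally show "fact n * (dharm (-lambda) k / real k * ((-1)^k * (w^k $ n))) =
        fact (k - 1) * (-1) ^ (n - k) * dharm (- lambda) k * dstirling2 lambda n k"
      using s by simp
  qed simp
  finally show ?thesis .
qed

end
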